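(* Under the saturation assumption below, suppose that $\hat{\mathcal I}$ is not a subset of any $\mathcal I\in\mathbb I^*$. Then $C_2=\sum_{\mathcal I\in\mathbb I^*}T_{\mathcal I}-\sum_{\mathcal I\in\overline{\mathbb I}^*}\overline T_{\mathcal I}$ (as a function of $\delta\in(0,\bar\delta]$) can be written as $P(\delta)/D(\delta)$, where $P$ and $D$ are polynomials in $\delta$, $D$ is a finite product of factors of the form $|\alpha_{\mathcal E(\mathcal I)}|-|\alpha_{\mathcal I}|$ ($\mathcal I\in\mathbb I$) or $|\alpha_{\overline{\mathcal E}(\mathcal I)}|-|\alpha_{\mathcal I}|$ ($\mathcal I\in\overline{\mathbb I}$), and $P(0)>0$.
   Context: A matching model: finite connected simple graph $\mathcal G=(\mathcal V,\xi)$, $\mathcal V=\{1,\dots,n\}$, arrival distribution $\alpha$ on $\mathcal V$; FCFS policy (an arriving item of class $i$ is matched with the oldest present item whose class is a neighbour of $i$, otherwise it waits). $\mathcal E(i)$ is the neighbour set of $i$ in $\mathcal G$, $\mathcal E(V)=\bigcup_{i\in V}\mathcal E(i)$, $|\alpha_V|=\sum_{i\in V}\alpha_i$. An independent set is a non-empty set of pairwise non-adjacent nodes; $\mathbb I$ is the set of independent sets of $\mathcal G$. Fix distinct non-adjacent nodes $i^*,j^*$; $\overline{\mathcal G}$ is $\mathcal G$ with edge $\{i^*,j^*\}$ added, with neighbourhood map $\overline{\mathcal E}$ and set of independent sets $\overline{\mathbb I}$. $\mathbb I^*=\{\mathcal I\in\mathbb I: i^*\in\mathcal I\text{ or }j^*\in\mathcal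 I\}$, $\mathbb I^{-*}=\mathbb I\setminus\mathbb I^*$, $\overline{\mathbb I}^*=\{\mathcal I\in\overline{\mathbb I}: i^*\in\mathcal I\text{ or }j^*\in\mathcal I\}$. For $\mathcal I\in\mathbb I$ and an ordering $(i_1,\dots,i_m)$ of $\mathcal I$, with $\mathcal I_k=\{i_1,\dots,i_k\}$, set $T_{(i_1,\dots,i_m)}=\prod_{k=1}^m\frac{\alpha_{i_k}}{|\alpha_{\mathcal E(\mathcal I_k)}|-|\alpha_{\mathcal I_k}|}$; $T_{\mathcal I}$ is the sum over all orderings of $\mathcal I$. $\overline T_{\mathcal I}$ ($\mathcal I\in\overline{\mathbb I}$) is defined identically with $\mathcal E$ replaced by $\overline{\mathcal E}$. Saturation assumption: $\alpha_i=a_i+b_i\delta$ with constants $a_i>0$, $b_i\in\mathbb R$, such that for all $\delta\in(0,\bar\delta]$ (some $\bar\delta>0$) $\alpha$ is a probability distribution satisfying the stability condition $|\alpha_{\mathcal I}|<|\alpha_{\mathcal E(\mathcal I)}|$ for all $\mathcal I\in\mathbb I$; moreover $\sum_{i\in\mathcal E(\hat{\mathcal I})}a_i-\sum_{i\in\hat{\mathcal I}}a_i=0$ for exactly one independent set $\hat{\mathcal I}\in\mathbb I$ (called saturated). *)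

theory Defs
  imports "HOL-Combinatorics.Multiset_Permutations" "HOL-Computational_Algebra.Polynomial"
begin

definition simple_graph :: "nat set \<Rightarrow> (nat \<Rightarrow> nat \<Rightarrow> bool) \<Rightarrow> bool" where
  "simple_graph V E \<longleftrightarrow> finite V \<and> (\<forall>x y. E x y \<longrightarrow> x \<in> V \<and> y \<in> V)
     \<and> (\<forall>x y. E x y \<longrightarrow> E y x) \<and> (\<forall>x. \<not> E x x)"

definition graph_connected :: "nat set \<Rightarrow> (nat \<Rightarrow> nat \<Rightarrow> bool) \<Rightarrow> bool" where
  "graph_connected V E \<longleftrightarrow> (\<forall>x\<in>V. \<forall>y\<in>V. (\<lambda>u v. E u v \<and> u \<in> V \<and> v \<in> V)\<^sup>*\<^sup>* x y)"

definition add_edge :: "(nat \<Rightarrow> nat \<Rightarrow> bool) \<Rightarrow> nat \<Rightarrow> nat \<Rightarrow> (nat \<Rightarrow> nat \<Rightarrow> bool)" where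
  "add_edge E i j = (\<lambda>x y. E x y \<or> (x = i \<and> y = j) \<or> (x = j \<and> y = i))"

definition nbr :: "nat set \<Rightarrow> (nat \<Rightarrow> nat \<Rightarrow> bool) \<Rightarrow> nat \<Rightarrow> nat set" where
  "nbr V E i = {j \<in> V. E i j}"

definition nbrs :: "nat set \<Rightarrow> (nat \<Rightarrow> nat \<Rightarrow> bool) \<Rightarrow> nat set \<Rightarrow> nat set" where
  "nbrs V E S = (\<Union>i\<in>S. nbr V E i)"

definition indep_sets :: "nat set \<Rightarrow> (nat \<Rightarrow> nat \<Rightarrow> bool) \<Rightarrow> nat set set" where
  "indep_sets V E = {I. I \<noteq> {} \<and> I \<subseteq> V \<and> (\<forall>x\<in>I. \<forall>y\<in>I. \<not> E x y)}"

definition T_ord :: "nat set \<Rightarrow> (nat \<Rightarrow> nat \<Rightarrow> bool) \<Rightarrow> (nat \<Rightarrow> real) \<Rightarrow> nat list \<Rightarrow> real" where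
  "T_ord V E alpha xs = (\<Prod>k\<in>{1..length xs}.
      alpha (xs ! (k - 1)) /
      ((\<Sum>i\<in>nbrs V E (set (take k xs)). alpha i) - (\<Sum>i\<in>set (take k xs). alpha i)))"

definition T_set :: "nat set \<Rightarrow> (nat \<Rightarrow> nat \<Rightarrow> bool) \<Rightarrow> (nat \<Rightarrow> real) \<Rightarrow> nat set \<Rightarrow> real" where
  "T_set V E alpha I = (\<Sum>xs\<in>permutations_of_set I. T_ord V E alpha xs)"

text \<open>The factor |alpha_{E(I)}| - |alpha_I| with alpha_i = a_i + b_i delta, as a polynomial in delta.\<close>
definition gap_poly :: "nat set \<Rightarrow> (nat \<Rightarrow> nat \<Rightarrow> bool) \<Rightarrow> (nat \<Rightarrow> real) \<Rightarrow> (nat \<Rightarrow> real) \<Rightarrow> nat set \<Rightarrow> real poly" where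
  "gap_poly V E a b I = [: (\<Sum>i\<in>nbrs V E I. a i) - (\<Sum>i\<in>I. a i),
                          (\<Sum>i\<in>nbrs V E I. b i) - (\<Sum>i\<in>I. b i) :]"

end

theory Submission
  imports Defs
begin

lemma ratsum:
  fixes Nf Df :: "'j \<Rightarrow> real poly"
  assumes "finite J" "\<forall>j\<in>J. poly (Df j) d \<noteq> 0"
  shows "(\<Sum>j\<in>J. poly (Nf j) d / poly (Df j) d)
       = poly (\<Sum>j\<in>J. Nf j * (\<Prod>i\<in>J-{j}. Df i)) d / poly (\<Prod>j\<in>J. Df j) d"
proof -
  have "poly (\<Sum>j\<in>J. Nf j * (\<Prod>i\<in>J-{j}. Df i)) d / poly (\<Prod>j\<in>J. Df j) d
     = (\<Sum>j\<in>J. poly (Nf j) d * (\<Prod>i\<in>J-{j}. poly (Df i) d) / (\<Prod>i\<in>J. poly (Df i) d))"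
    by (simp add: poly_sum poly_prod sum_divide_distrib)
  also have "\<dots> = (\<Sum>j\<in>J. poly (Nf j) d / poly (Df j) d)"
  proof (rule sum.cong[OF refl])
    fix j assume j: "j \<in> J"
    have e: "(\<Prod>i\<in>J. poly (Df i) d) = poly (Df j) d * (\<Prod>i\<in>J-{j}. poly (Df i) d)"
      using prod.remove[OF assms(1) j] .
    have nz: "(\<Prod>i\<in>J-{j}. poly (Df i) d) \<noteq> 0" using assms by auto
    show "poly (Nf j) d * (\<Prod>i\<in>J-{j}. poly (Df i) d) / (\<Prod>i\<in>J. poly (Df i) d) = poly (Nf j) d / poly (Df j) d"
      using nz unfolding e by simp
  qed
  finally show ?thesis by simp
qed

lemma prod_list_concat_map:
  "distinct js \<Longrightarrow> prod_list (map h (concat (map L js))) = (\<Prod>j\<in>set js. prod_list (map h (L j)))"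
  by (induction js) auto

lemma prod_list_upt:
  "prod_list (map h (map f [1..<n+1])) = (\<Prod>k\<in>{1..n}. h (f k))"
proof -
  have "(\<Prod>k\<in>set [1..<n+1]. h (f k)) = prod_list (map (\<lambda>k. h (f k)) [1..<n+1])"
    by (rule prod.distinct_set_conv_list) simp
  moreover have "set [1..<n+1] = {1..n}" by auto
  ultimately show ?thesis by (simp add: comp_def)
qed

lemma poly_gap:
  "poly (gap_poly V E a b S) d = (\<Sum>i\<in>nbrs V E S. a i + b i * d) - (\<Sum>i\<in>S. a i + b i * d)"
  by (simp add: gap_poly_def sum.distrib sum_distrib_left right_diff_distrib mult.commute)

lemma prefix_facts:
  assumes "xs \<in> permutations_of_set I" "k \<in> {1..length xs}"
  shows "set (take k xs) \<subseteq> I" "set (take k xs) \<noteq> {}" "xs ! (k-1) \<in> I"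
  using assms by (auto simp: permutations_of_set_def dest: in_set_takeD)

lemma prefix_indep:
  assumes "I \<in> indep_sets V G" "xs \<in> permutations_of_set I" "k \<in> {1..length xs}"
  shows "set (take k xs) \<in> indep_sets V G"
  using assms prefix_facts[OF assms(2,3)] unfolding indep_sets_def by blast

lemma lim_nonneg:
  fixes c0 c1 dbar :: real
  assumes "dbar > 0" "\<forall>d\<in>{0<..dbar}. c0 + c1 * d > 0"
  shows "c0 \<ge> 0"
proof (rule ccontr)
  assume "\<not> c0 \<ge> 0"
  define d where "d = min dbar (- c0 / (2 * (\<bar>c1\<bar> + 1)))"
  have "- c0 / (2 * (\<bar>c1\<bar> + 1)) > 0" using \<open>\<not> c0 \<ge> 0\<close>
    by (intro divide_pos_pos) (auto simp: abs_add_one_gt_zero)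
  hence dpos: "d > 0" using assms by (simp add: d_def)
  have "d \<le> dbar" by (simp add: d_def)
  have "d \<le> - c0 / (2 * (\<bar>c1\<bar> + 1))" by (simp add: d_def)
  hence "d * (2 * (\<bar>c1\<bar> + 1)) \<le> - c0"
    by (smt (verit, ccfv_SIG) divide_minus_left le_divide_eq mult.commute)
  moreover have "c1 * d \<le> \<bar>c1\<bar> * d" using dpos by (simp add: mult_right_mono)
  moreover have "\<bar>c1\<bar> * d \<le> d * (2 * (\<bar>c1\<bar> + 1))" using dpos by (simp add: algebra_simps)
  ultimately have "c0 + c1 * d \<le> 0" by linarith
  with assms(2) dpos \<open>d \<le> dbar\<close> show False by force
qed

lemma poly_gap0:
  "poly (gap_poly V E a b S) d = ((\<Sum>i\<in>nbrs V E S. a i) - (\<Sum>i\<in>S. a i))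
       + ((\<Sum>i\<in>nbrs V E S. b i) - (\<Sum>i\<in>S. b i)) * d"
  by (simp add: gap_poly_def mult.commute)

lemma T_ord_poly:
  "T_ord V G (\<lambda>i. a i + b i * d) xs =
     poly (\<Prod>k\<in>{1..length xs}. [:a (xs!(k-1)), b (xs!(k-1)):]) d /
     poly (\<Prod>k\<in>{1..length xs}. gap_poly V G a b (set (take k xs))) d"
  unfolding T_ord_def by (simp add: prod_dividef poly_prod poly_gap mult.commute)

lemma T_ord_pos:
  assumes "\<forall>k\<in>{1..length xs}. alpha (xs!(k-1)) > 0 \<and>
     (\<Sum>i\<in>nbrs V G (set (take k xs)). alpha i) - (\<Sum>i\<in>set (take k xs). alpha i) > 0"
  shows "T_ord V G alpha xs > 0"
  unfolding T_ord_def using assms by (intro prod_pos) auto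

lemma T_ord_mono:
  assumes "\<forall>k\<in>{1..length xs}. alpha (xs!(k-1)) \<ge> 0 \<and>
     (\<Sum>i\<in>nbrs V G (set (take k xs)). alpha i) - (\<Sum>i\<in>set (take k xs). alpha i) > 0 \<and>
     (\<Sum>i\<in>nbrs V G (set (take k xs)). alpha i) \<le> (\<Sum>i\<in>nbrs V H (set (take k xs)). alpha i)"
  shows "T_ord V H alpha xs \<le> T_ord V G alpha xs"
  unfolding T_ord_def
proof (rule prod_mono)
  fix k assume k: "k \<in> {1..length xs}"
  show "0 \<le> alpha (xs ! (k - 1)) /
          ((\<Sum>i\<in>nbrs V H (set (take k xs)). alpha i) - (\<Sum>i\<in>set (take k xs). alpha i)) \<and>
        alpha (xs ! (k - 1)) /
          ((\<Sum>i\<in>nbrs V H (set (take k xs)). alpha i) - (\<Sum>i\<in>set (take k xs). alpha i))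
        \<le> alpha (xs ! (k - 1)) /
          ((\<Sum>i\<in>nbrs V G (set (take k xs)). alpha i) - (\<Sum>i\<in>set (take k xs). alpha i))"
  proof -
    have h: "alpha (xs ! (k - 1)) \<ge> 0" "(\<Sum>i\<in>nbrs V G (set (take k xs)). alpha i) - (\<Sum>i\<in>set (take k xs). alpha i) > 0"
      "(\<Sum>i\<in>nbrs V G (set (take k xs)). alpha i) \<le> (\<Sum>i\<in>nbrs V H (set (take k xs)). alpha i)"
      using assms k by auto
    show ?thesis using h by (auto intro!: divide_left_mono divide_nonneg_pos mult_pos_pos)
  qed
qed

theorem mainTheorem7:
  fixes n :: nat and E :: "nat \<Rightarrow> nat \<Rightarrow> bool" and istar jstar :: nat
    and a b :: "nat \<Rightarrow> real" and dbar :: real and hatI :: "nat set"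
  defines "V \<equiv> {1..n}"
  defines "alpha \<equiv> (\<lambda>(d::real) i. a i + b i * d)"
  defines "Ebar \<equiv> add_edge E istar jstar"
  defines "Istar \<equiv> {I \<in> indep_sets V E. istar \<in> I \<or> jstar \<in> I}"
  defines "IbarStar \<equiv> {I \<in> indep_sets V Ebar. istar \<in> I \<or> jstar \<in> I}"
  assumes graph: "simple_graph V E" and conn: "graph_connected V E"
    and ij: "istar \<in> V" "jstar \<in> V" "istar \<noteq> jstar" "\<not> E istar jstar"
    and a_pos: "\<forall>i\<in>V. a i > 0"
    and dbar_pos: "dbar > 0"
    and prob: "\<forall>d\<in>{0<..dbar}. (\<forall>i\<in>V. alpha d i \<ge> 0) \<and> (\<Sum>i\<in>V. alpha d i) = 1"
    and stable: "\<forall>d\<in>{0<..dbar}. \<forall>I\<in>indep_sets V E.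
                    (\<Sum>i\<in>I. alpha d i) < (\<Sum>i\<in>nbrs V E I. alpha d i)"
    and hat_indep: "hatI \<in> indep_sets V E"
    and hat_sat: "(\<Sum>i\<in>nbrs V E hatI. a i) - (\<Sum>i\<in>hatI. a i) = 0"
    and hat_unique: "\<forall>I\<in>indep_sets V E.
                       (\<Sum>i\<in>nbrs V E I. a i) - (\<Sum>i\<in>I. a i) = 0 \<longrightarrow> I = hatI"
    and not_sub: "\<forall>I\<in>Istar. \<not> hatI \<subseteq> I"
  shows "\<exists>P D :: real poly. \<exists>fs :: (nat set \<times> bool) list.
           (\<forall>(I, g)\<in>set fs. if g then I \<in> indep_sets V Ebar else I \<in> indep_sets V E)
         \<and> D = prod_list (map (\<lambda>(I, g). gap_poly V (if g then Ebar else E) a b I) fs)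
         \<and> (\<forall>d\<in>{0<..dbar}.
              (\<Sum>I\<in>Istar. T_set V E (alpha d) I) - (\<Sum>I\<in>IbarStar. T_set V Ebar (alpha d) I)
              = poly P d / poly D d)
         \<and> poly P 0 > 0"
  proof -
  have finV: "finite V" using graph unfolding simple_graph_def by blast
  have Eb: "\<And>x y. E x y \<Longrightarrow> Ebar x y" unfolding Ebar_def add_edge_def by blast
  have indsub: "indep_sets V Ebar \<subseteq> indep_sets V E"
    unfolding indep_sets_def using Eb by blast
  have nbsub: "\<And>S. nbrs V E S \<subseteq> nbrs V Ebar S"
    unfolding nbrs_def nbr_def using Eb by blast
  have nbV: "\<And>G S. nbrs V G S \<subseteq> V" unfolding nbrs_def nbr_def by blast
  have IbIs: "IbarStar \<subseteq> Istar" unfolding IbarStar_def Istar_def using indsub by blast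
  have finIs: "finite Istar"
    by (rule finite_subset[of _ "Pow V"]) (auto simp: Istar_def indep_sets_def finV)
  have finIb: "finite IbarStar" using finite_subset[OF IbIs finIs] .
  have indfin: "\<And>G I. I \<in> indep_sets V G \<Longrightarrow> finite I"
    unfolding indep_sets_def using finV finite_subset by blast
  define Dset where "Dset = insert 0 {0<..dbar}"
  have anonneg: "\<forall>d\<in>Dset. \<forall>i\<in>V. a i + b i * d \<ge> 0"
    using prob a_pos unfolding Dset_def alpha_def by (auto intro: less_imp_le)
  have gapE: "poly (gap_poly V E a b S) d > 0"
    if "d \<in> Dset" "S \<in> indep_sets V E" "S \<noteq> hatI" for d S
  proof (cases "d = 0")
    case False
    with that have "d \<in> {0<..dbar}" unfolding Dset_def by auto
    with stable that show ?thesis by (auto simp: poly_gap alpha_def)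
  next
    case True
    have "\<forall>d\<in>{0<..dbar}. poly (gap_poly V E a b S) d > 0"
      using stable that by (auto simp: poly_gap alpha_def)
    hence "(\<Sum>i\<in>nbrs V E S. a i) - (\<Sum>i\<in>S. a i) \<ge> 0"
      using lim_nonneg[OF dbar_pos] unfolding poly_gap0 by blast
    moreover have "(\<Sum>i\<in>nbrs V E S. a i) - (\<Sum>i\<in>S. a i) \<noteq> 0"
      using hat_unique that by blast
    ultimately show ?thesis using True by (simp add: poly_gap0)
  qed
  have gapmono: "poly (gap_poly V E a b S) d \<le> poly (gap_poly V Ebar a b S) d"
    if "d \<in> Dset" for d S
  proof -
    have "(\<Sum>i\<in>nbrs V E S. a i + b i * d) \<le> (\<Sum>i\<in>nbrs V Ebar S. a i + b i * d)"
    proof (rule sum_mono2)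
      show "finite (nbrs V Ebar S)" using finite_subset[OF nbV finV] .
      show "nbrs V E S \<subseteq> nbrs V Ebar S" by (rule nbsub)
      show "0 \<le> a i + b i * d" if "i \<in> nbrs V Ebar S - nbrs V E S" for i
        using anonneg \<open>d \<in> Dset\<close> nbV that by blast
    qed
    thus ?thesis by (simp add: poly_gap)
  qed
  have gapEb: "poly (gap_poly V Ebar a b S) d > 0"
    if "d \<in> Dset" "S \<in> indep_sets V Ebar" "S \<noteq> hatI" for d S
    proof -
    have "S \<in> indep_sets V E" using indsub that(2) by blast
    hence "poly (gap_poly V E a b S) d > 0" using gapE[OF that(1) _ that(3)] by blast
    thus ?thesis using gapmono[OF that(1), of S] by linarith
  qed
  define J1 where "J1 = Sigma Istar permutations_of_set"
  define J2 where "J2 = Sigma IbarStar permutations_of_set"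
  define J where "J = (\<lambda>p. (p, False)) ` J1 \<union> (\<lambda>p. (p, True)) ` J2"
  define G where "G = (\<lambda>g::bool. if g then Ebar else E)"
  define Nf where "Nf = (\<lambda>j::(nat set \<times> nat list) \<times> bool.
       smult (if snd j then -1 else 1) (\<Prod>k\<in>{1..length (snd (fst j))}.
          [:a (snd (fst j)!(k-1)), b (snd (fst j)!(k-1)):]))"
  define Df where "Df = (\<lambda>j::(nat set \<times> nat list) \<times> bool.
       (\<Prod>k\<in>{1..length (snd (fst j))}. gap_poly V (G (snd j)) a b (set (take k (snd (fst j))))))"
  define Lf where "Lf = (\<lambda>j::(nat set \<times> nat list) \<times> bool.
       map (\<lambda>k. (set (take k (snd (fst j))), snd j)) [1..<length (snd (fst j)) + 1])"
  have finJ: "finite J" unfolding J_def J1_def J2_def using finIs finIb by auto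
  obtain js where js: "set js = J" "distinct js" using finite_distinct_list[OF finJ] by blast
  define fs where "fs = concat (map Lf js)"
  define D where "D = (\<Prod>j\<in>J. Df j)"
  define P where "P = (\<Sum>j\<in>J. Nf j * (\<Prod>i\<in>J-{j}. Df i))"
  have Jmem: "\<And>I xs g. ((I, xs), g) \<in> J \<Longrightarrow>
      xs \<in> permutations_of_set I \<and> I \<in> indep_sets V (G g) \<and> I \<in> Istar"
    unfolding J_def J1_def J2_def G_def using IbIs by (auto simp: Istar_def IbarStar_def)
  have pref: "set (take k xs) \<in> indep_sets V (G g) \<and> set (take k xs) \<noteq> hatI"
    if "((I, xs), g) \<in> J" "k \<in> {1..length xs}" for I xs g k
  proof -
    from Jmem[OF that(1)] have h: "xs \<in> permutations_of_set I" "I \<in> indep_sets V (G g)" "I \<in> Istar"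
      by auto
    have "set (take k xs) \<subseteq> I" using prefix_facts[OF h(1) that(2)] by blast
    hence "set (take k xs) \<noteq> hatI" using not_sub h(3) by blast
    thus ?thesis using prefix_indep[OF h(2,1) that(2)] by blast
  qed
  have gappos: "poly (gap_poly V (G g) a b (set (take k xs))) d > 0"
    if "((I, xs), g) \<in> J" "k \<in> {1..length xs}" "d \<in> Dset" for I xs g k d
    using pref[OF that(1,2)] gapE[OF that(3)] gapEb[OF that(3)] unfolding G_def
    by (cases g) auto
  have Dfpos: "poly (Df j) d > 0" if "j \<in> J" "d \<in> Dset" for j d
  proof -
    obtain I xs g where j: "j = ((I, xs), g)" by (metis prod.collapse)
    show ?thesis unfolding Df_def j poly_prod using gappos that j by (auto intro!: prod_pos)
  qed
  define C2 where "C2 = (\<lambda>d. (\<Sum>I\<in>Istar. T_set V E (alpha d) I) - (\<Sum>I\<in>IbarStar. T_set V Ebar (alpha d) I))"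
  have C2sum: "C2 d = (\<Sum>j\<in>J. poly (Nf j) d / poly (Df j) d)" for d
  proof -
    have s1: "(\<Sum>I\<in>Istar. T_set V E (alpha d) I) = (\<Sum>p\<in>J1. T_ord V E (alpha d) (snd p))"
      unfolding T_set_def J1_def using finIs by (subst sum.Sigma) (auto simp: case_prod_beta)
    have s2: "(\<Sum>I\<in>IbarStar. T_set V Ebar (alpha d) I) = (\<Sum>p\<in>J2. T_ord V Ebar (alpha d) (snd p))"
      unfolding T_set_def J2_def using finIb by (subst sum.Sigma) (auto simp: case_prod_beta)
    have fJ1: "finite J1" "finite J2" using finJ unfolding J_def by (auto dest: finite_imageD simp: inj_on_def)
    have tm: "poly (Nf j) d / poly (Df j) d =
        (if snd j then -1 else 1) * T_ord V (G (snd j)) (alpha d) (snd (fst j))" for j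
      unfolding Nf_def Df_def alpha_def T_ord_poly by simp
    have "(\<Sum>j\<in>J. poly (Nf j) d / poly (Df j) d)
        = (\<Sum>j\<in>(\<lambda>p. (p, False)) ` J1. poly (Nf j) d / poly (Df j) d)
          + (\<Sum>j\<in>(\<lambda>p. (p, True)) ` J2. poly (Nf j) d / poly (Df j) d)"
      unfolding J_def using fJ1 by (intro sum.union_disjoint) auto
    also have "\<dots> = (\<Sum>p\<in>J1. T_ord V E (alpha d) (snd p)) - (\<Sum>p\<in>J2. T_ord V Ebar (alpha d) (snd p))"
    proof -
      have "(\<Sum>j\<in>(\<lambda>p. (p, False)) ` J1. poly (Nf j) d / poly (Df j) d) = (\<Sum>p\<in>J1. T_ord V E (alpha d) (snd p))"
        by (subst sum.reindex) (auto simp: inj_on_def tm G_def)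
      moreover have "(\<Sum>j\<in>(\<lambda>p. (p, True)) ` J2. poly (Nf j) d / poly (Df j) d) = - (\<Sum>p\<in>J2. T_ord V Ebar (alpha d) (snd p))"
        by (subst sum.reindex) (auto simp: inj_on_def tm G_def sum_negf)
      ultimately show ?thesis by simp
    qed
    finally show ?thesis unfolding C2_def s1 s2 by simp
  qed
  have key: "C2 d = poly P d / poly D d" if "d \<in> Dset" for d
  proof -
    have "\<forall>j\<in>J. poly (Df j) d \<noteq> 0" using Dfpos that by (metis less_numeral_extra(3))
    thus ?thesis unfolding C2sum P_def D_def by (rule ratsum[OF finJ])
  qed
  have Dlist: "D = prod_list (map (\<lambda>(I, g). gap_poly V (if g then Ebar else E) a b I) fs)"
  proof -
    have "prod_list (map (\<lambda>(I, g). gap_poly V (if g then Ebar else E) a b I) fs)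
        = (\<Prod>j\<in>J. prod_list (map (\<lambda>(I, g). gap_poly V (if g then Ebar else E) a b I) (Lf j)))"
      unfolding fs_def using prod_list_concat_map[OF js(2)] js(1) by metis
    also have "\<dots> = D" unfolding D_def Lf_def Df_def G_def
      by (intro prod.cong refl, subst prod_list_upt) simp
    finally show ?thesis by simp
  qed
  have fsok: "\<forall>(I, g)\<in>set fs. if g then I \<in> indep_sets V Ebar else I \<in> indep_sets V E"
  proof
    fix x assume "x \<in> set fs"
    then obtain j where j: "j \<in> J" "x \<in> set (Lf j)" unfolding fs_def using js(1) by auto
    obtain I xs g where jj: "j = ((I, xs), g)" by (metis prod.collapse)
    from j(2) have "x \<in> (\<lambda>k. (set (take k xs), g)) ` {1..<length xs + 1}"
      unfolding Lf_def jj by (simp only: set_map set_upt fst_conv snd_conv)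
    then obtain k where k0: "k \<in> {1..<length xs + 1}" "x = (set (take k xs), g)" by blast
    have k: "k \<in> {1..length xs}" "x = (set (take k xs), g)" using k0 by auto
    show "case x of (I, g) \<Rightarrow> if g then I \<in> indep_sets V Ebar else I \<in> indep_sets V E"
      using pref[OF j(1)[unfolded jj] k(1)] k(2) unfolding G_def by auto
  qed
  have Dset0: "0 \<in> Dset" unfolding Dset_def by simp
  have D0: "poly D 0 > 0" unfolding D_def poly_prod using Dfpos Dset0 by (auto intro!: prod_pos)
  have alpha0: "alpha 0 = a" unfolding alpha_def by auto
  have gap0: "(\<Sum>i\<in>nbrs V G' S. a i) - (\<Sum>i\<in>S. a i) = poly (gap_poly V G' a b S) 0" for G' S
    by (simp add: poly_gap0)
  have Tpos: "T_ord V E a xs > 0" if "I \<in> Istar" "xs \<in> permutations_of_set I" for I xs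
  proof (rule T_ord_pos, intro ballI conjI)
    fix k assume k: "k \<in> {1..length xs}"
    have j: "((I, xs), False) \<in> J" unfolding J_def J1_def using that by auto
    have "I \<subseteq> V" using that(1) unfolding Istar_def indep_sets_def by auto
    thus "a (xs ! (k-1)) > 0" using prefix_facts(3)[OF that(2) k] a_pos by auto
    show "(\<Sum>i\<in>nbrs V E (set (take k xs)). a i) - (\<Sum>i\<in>set (take k xs). a i) > 0"
      unfolding gap0 using gappos[OF j k Dset0] unfolding G_def by simp
  qed
  have Tle: "T_ord V Ebar a xs \<le> T_ord V E a xs" if "I \<in> IbarStar" "xs \<in> permutations_of_set I" for I xs
  proof (rule T_ord_mono, intro ballI conjI)
    fix k assume k: "k \<in> {1..length xs}"
    have j: "((I, xs), False) \<in> J" unfolding J_def J1_def using that IbIs by auto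
    have "I \<subseteq> V" using that(1) unfolding IbarStar_def indep_sets_def by auto
    thus "a (xs ! (k-1)) \<ge> 0" using prefix_facts(3)[OF that(2) k] a_pos by (auto intro: less_imp_le)
    show "(\<Sum>i\<in>nbrs V E (set (take k xs)). a i) - (\<Sum>i\<in>set (take k xs). a i) > 0"
      unfolding gap0 using gappos[OF j k Dset0] unfolding G_def by simp
    show "(\<Sum>i\<in>nbrs V E (set (take k xs)). a i) \<le> (\<Sum>i\<in>nbrs V Ebar (set (take k xs)). a i)"
      using gapmono[OF Dset0, of "set (take k xs)"] by (simp add: poly_gap0)
  qed
  define Ipair where "Ipair = {istar, jstar}"
  have Ipair: "Ipair \<in> Istar - IbarStar"
  proof -
    have "\<not> E x y" if "x \<in> Ipair" "y \<in> Ipair" for x y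
      using that graph ij unfolding simple_graph_def Ipair_def by auto
    hence "Ipair \<in> Istar" unfolding Istar_def indep_sets_def Ipair_def using ij by auto
    moreover have "Ipair \<notin> IbarStar"
      unfolding IbarStar_def indep_sets_def Ipair_def Ebar_def add_edge_def by auto
    ultimately show ?thesis by blast
  qed
  have TsetE_nonneg: "T_set V E a I \<ge> 0" if "I \<in> Istar" for I
    unfolding T_set_def
  proof (rule sum_nonneg)
    fix xs assume "xs \<in> permutations_of_set I"
    thus "0 \<le> T_ord V E a xs" using Tpos[OF that] by (simp add: less_imp_le)
  qed
  have Tpair: "T_set V E a Ipair > 0"
  proof -
    have "[istar, jstar] \<in> permutations_of_set Ipair" using ij unfolding Ipair_def by auto
    thus ?thesis unfolding T_set_def using Tpos Ipair
      by (intro sum_pos) (auto simp: Ipair_def)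
  qed
  have C20: "C2 0 > 0"
  proof -
    have "(\<Sum>I\<in>Istar. T_set V E a I) = (\<Sum>I\<in>IbarStar. T_set V E a I) + (\<Sum>I\<in>Istar - IbarStar. T_set V E a I)"
      using sum.subset_diff[OF IbIs finIs, of "T_set V E a"] by simp
    moreover have "(\<Sum>I\<in>IbarStar. T_set V Ebar a I) \<le> (\<Sum>I\<in>IbarStar. T_set V E a I)"
      unfolding T_set_def using Tle by (intro sum_mono) auto
    moreover have "T_set V E a Ipair \<le> (\<Sum>I\<in>Istar - IbarStar. T_set V E a I)"
      using Ipair TsetE_nonneg finIs by (intro member_le_sum) auto
    ultimately show ?thesis unfolding C2_def alpha0 using Tpair by linarith
  qed
  have P0: "poly P 0 > 0"
  proof -
    have "poly P 0 = C2 0 * poly D 0" using key[OF Dset0] D0 by simp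
    thus ?thesis using C20 D0 by simp
  qed
  show ?thesis
  proof (intro exI conjI)
    show "\<forall>(I, g)\<in>set fs. if g then I \<in> indep_sets V Ebar else I \<in> indep_sets V E" by (rule fsok)
    show "D = prod_list (map (\<lambda>(I, g). gap_poly V (if g then Ebar else E) a b I) fs)" by (rule Dlist)
    show "\<forall>d\<in>{0<..dbar}. (\<Sum>I\<in>Istar. T_set V E (alpha d) I) - (\<Sum>I\<in>IbarStar. T_set V Ebar (alpha d) I)
              = poly P d / poly D d"
      using key unfolding C2_def Dset_def by auto
    show "poly P 0 > 0" by (rule P0)
  qed
qed

end
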